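(* Let $P$ and $Q$ be probability measures on a measurable space $(\mathcal T,\mathscr F)$ with $P\ll Q$, let $M\in(0,\infty)$, and let $\omega(\tau)=\frac{dP}{dQ}(\tau)$ and $\check\omega(\tau)=\min\{M,\omega(\tau)\}$. Then for any $\alpha\in(0,\infty]$ and any $\beta\in[0,1]$, $$\mathbb E_{\tau\sim Q}[\check\omega(\tau)^\alpha]^{1/\alpha}\le M^{1-\beta}d_{\alpha\beta}(P\|Q)^{\beta-\frac1\alpha}.$$ Furthermore, for any $\beta\in[1,\infty]$, $$\mathbb E_{\tau\sim Q}[\omega(\tau)-\check\omega(\tau)]\le\left(\frac{d_\beta(P\|Q)}{M}\right)^{\beta-1}.$$
   Context: For $P\ll Q$ and $\gamma\in[0,\infty]$, the Rényi divergence is $D_\gamma(P\|Q)=\frac{1}{\gamma-1}\log\int(\frac{dP}{dQ})^\gamma dQ$ (with the limiting values at $\gamma=1$, where it equals the KL divergence, and at $\gamma=\infty$, where $D_\infty=\log\operatorname{ess\,sup}\frac{dP}{dQ}$), and the exponentiated Rényi divergence is $d_\gamma(P\|Q)=\exp[D_\gamma(P\|Q)]$. In particular $\mathbb E_Q[(\frac{dP}{dQ})^\gamma]=d_\gamma(P\|Q)^{\gamma-1}$. *)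

theory Defs
  imports "HOL-Probability.Probability"
begin

definition epowr :: "ennreal \<Rightarrow> real \<Rightarrow> ennreal" where
  "epowr x r =
     (if r = 0 then 1
      else if x = \<infinity> then (if r > 0 then \<infinity> else 0)
      else if x = 0 then (if r > 0 then 0 else \<infinity>)
      else ennreal (enn2real x powr r))"

definition eepowr :: "ennreal \<Rightarrow> ereal \<Rightarrow> ennreal" where
  "eepowr x r =
     (if r = \<infinity> then (if x > 1 then \<infinity> else if x = 1 then 1 else 0)
      else epowr x (real_of_ereal r))"

text \<open>Real-valued version of the Radon-Nikodym derivative dP/dQ
(finite Q-a.e.).\<close>
definition rn_density :: "'a measure \<Rightarrow> 'a measure \<Rightarrow> 'a \<Rightarrow> real" where
  "rn_density P Q x = enn2real (RN_deriv Q P x)"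

text \<open>KL divergence KL(P||Q) = \<integral> \<omega> ln \<omega> dQ, as an extended real
(positive part minus negative part; the negative part is always finite).\<close>
definition KL_div :: "'a measure \<Rightarrow> 'a measure \<Rightarrow> ereal" where
  "KL_div P Q =
     enn2ereal (\<integral>\<^sup>+ x. ennreal (rn_density P Q x * max (ln (rn_density P Q x)) 0) \<partial>Q)
   - enn2ereal (\<integral>\<^sup>+ x. ennreal (rn_density P Q x * max (- ln (rn_density P Q x)) 0) \<partial>Q)"

text \<open>Exponentiated Renyi divergence d_\<gamma>(P||Q) = exp D_\<gamma>(P||Q), for \<gamma> \<in> [0,\<infinity>].
For finite \<gamma> \<noteq> 1 it is (\<integral> \<omega>^\<gamma> dQ)^(1/(\<gamma>-1)) (with the convention
0 powr 0 = 0, giving the limiting value D_0 = -log Q(\<omega> > 0));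
d_1 = exp KL, d_\<infinity> = ess sup \<omega>.\<close>
definition exp_renyi :: "'a measure \<Rightarrow> 'a measure \<Rightarrow> ereal \<Rightarrow> ennreal" where
  "exp_renyi P Q \<gamma> =
     (if \<gamma> = \<infinity> then esssup Q (RN_deriv Q P)
      else if \<gamma> = 1 then
        (if KL_div P Q = \<infinity> then \<infinity> else ennreal (exp (real_of_ereal (KL_div P Q))))
      else epowr (\<integral>\<^sup>+ x. ennreal (rn_density P Q x powr real_of_ereal \<gamma>) \<partial>Q)
                 (1 / (real_of_ereal \<gamma> - 1)))"

definition Lp_norm :: "'a measure \<Rightarrow> ('a \<Rightarrow> real) \<Rightarrow> ereal \<Rightarrow> ennreal" where
  "Lp_norm Q f p =
     (if p = \<infinity> then esssup Q (\<lambda>x. ennreal (f x))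
      else epowr (\<integral>\<^sup>+ x. ennreal (f x powr real_of_ereal p) \<partial>Q) (1 / real_of_ereal p))"

end

theory Submission
  imports Defs
begin

lemma base_facts:
  fixes P Q :: "'a measure"
  assumes "prob_space P" and "prob_space Q"
    and "sets P = sets Q"
    and "absolutely_continuous Q P"
  shows "rn_density P Q \<in> borel_measurable Q"
    and "AE x in Q. RN_deriv Q P x = ennreal (rn_density P Q x)"
    and "(\<integral>\<^sup>+ x. ennreal (rn_density P Q x) \<partial>Q) = 1"
    and "\<not> (AE x in Q. rn_density P Q x = 0)"
proof -
  interpret Q: prob_space Q by fact
  interpret P: prob_space P by fact
  show m: "rn_density P Q \<in> borel_measurable Q" unfolding rn_density_def by measurable
  have fin: "AE x in Q. RN_deriv Q P x \<noteq> \<infinity>"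
    by (rule Q.RN_deriv_finite) (use assms P.sigma_finite_measure_axioms in auto)
  show ae: "AE x in Q. RN_deriv Q P x = ennreal (rn_density P Q x)"
    using fin by eventually_elim (auto simp: rn_density_def less_top)
  have "integral\<^sup>N P (\<lambda>_. 1) = (\<integral>\<^sup>+x. RN_deriv Q P x * 1 \<partial>Q)"
    by (rule Q.RN_deriv_nn_integral) (use assms in auto)
  then have "(\<integral>\<^sup>+x. RN_deriv Q P x \<partial>Q) = 1" by (simp add: P.emeasure_space_1)
  also have "(\<integral>\<^sup>+x. RN_deriv Q P x \<partial>Q) = (\<integral>\<^sup>+ x. ennreal (rn_density P Q x) \<partial>Q)"
    by (rule nn_integral_cong_AE) (use ae in auto)
  finally show i1: "(\<integral>\<^sup>+ x. ennreal (rn_density P Q x) \<partial>Q) = 1" .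
  show "\<not> (AE x in Q. rn_density P Q x = 0)"
  proof
    assume "AE x in Q. rn_density P Q x = 0"
    then have "(\<integral>\<^sup>+ x. ennreal (rn_density P Q x) \<partial>Q) = (\<integral>\<^sup>+ x. 0 \<partial>Q)"
      by (intro nn_integral_cong_AE) auto
    with i1 show False by simp
  qed
qed

lemma epowr_fin: "0 < x \<Longrightarrow> r \<noteq> 0 \<Longrightarrow> epowr (ennreal x) r = ennreal (x powr r)"
  by (simp add: epowr_def)

lemma epowr_top': "r > 0 \<Longrightarrow> epowr top r = top"
  by (simp add: epowr_def)

lemma epowr_top: "r > 0 \<Longrightarrow> epowr \<infinity> r = \<infinity>"
  by (simp add: epowr_def)

lemma epowr_zero: "r > 0 \<Longrightarrow> epowr 0 r = 0"
  by (simp add: epowr_def)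

lemma ptw1:
  fixes M a b x :: real
  assumes "M > 0" "a > 0" "0 \<le> b" "b \<le> 1" "x \<ge> 0"
  shows "min M x powr a \<le> M powr (a*(1-b)) * x powr (a*b)"
proof (cases "x = 0")
  case True then show ?thesis using assms by simp
next
  case False
  let ?m = "min M x"
  have mp: "?m > 0" using False assms by auto
  have "?m powr a = ?m powr (a*(1-b)) * ?m powr (a*b)"
    by (simp add: powr_add[symmetric] algebra_simps)
  also have "\<dots> \<le> M powr (a*(1-b)) * x powr (a*b)"
    by (intro mult_mono powr_mono2) (use assms mp in auto)
  finally show ?thesis .
qed

lemma I_pos:
  fixes P Q :: "'a measure"
  assumes "prob_space P" and "prob_space Q"
    and "sets P = sets Q"
    and "absolutely_continuous Q P"
  shows "(\<integral>\<^sup>+ x. ennreal (rn_density P Q x powr g) \<partial>Q) \<noteq> 0"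
proof
  note bf = base_facts[OF assms]
  assume "(\<integral>\<^sup>+ x. ennreal (rn_density P Q x powr g) \<partial>Q) = 0"
  then have "AE x in Q. ennreal (rn_density P Q x powr g) = 0"
    by (subst (asm) nn_integral_0_iff_AE) (use bf(1) in auto)
  then have "AE x in Q. rn_density P Q x = 0"
    by eventually_elim auto
  with bf(4) show False by simp
qed

lemma I_fin:
  fixes P Q :: "'a measure"
  assumes "prob_space P" and "prob_space Q"
    and "sets P = sets Q"
    and "absolutely_continuous Q P" and "0 \<le> g" "g \<le> 1"
  shows "(\<integral>\<^sup>+ x. ennreal (rn_density P Q x powr g) \<partial>Q) < \<infinity>"
proof -
  interpret Q: prob_space Q by fact
  note bf = base_facts[OF assms(1-4)]
  have "(\<integral>\<^sup>+ x. ennreal (rn_density P Q x powr g) \<partial>Q) \<le> (\<integral>\<^sup>+ x. ennreal 1 + ennreal (rn_density P Q x) \<partial>Q)"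
  proof (intro nn_integral_mono)
    fix x
    have w: "rn_density P Q x \<ge> 0" by (simp add: rn_density_def)
    have "rn_density P Q x powr g \<le> 1 + rn_density P Q x"
    proof (cases "rn_density P Q x \<le> 1")
      case True
      then have "rn_density P Q x powr g \<le> 1" using w assms(5)
        by (intro powr_le1) auto
      then show ?thesis using w by linarith
    next
      case False
      then have "rn_density P Q x powr g \<le> rn_density P Q x powr 1"
        by (intro powr_mono) (use assms in auto)
      then show ?thesis using w False by simp
    qed
    from ennreal_leI[OF this] show "ennreal (rn_density P Q x powr g) \<le> ennreal 1 + ennreal (rn_density P Q x)"
      using w by (simp add: ennreal_plus)
  qed
  also have "\<dots> = 2"
    by (subst nn_integral_add) (use bf(1,3) in \<open>auto simp: Q.emeasure_space_1\<close>)
  finally show ?thesis by (simp add: le_less_trans)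
qed

lemma part1_fin:
  fixes P Q :: "'a measure" and M a b :: real
  assumes "prob_space P" and "prob_space Q"
    and "sets P = sets Q"
    and "absolutely_continuous Q P"
    and "M > 0" "a > 0" "0 \<le> b" "b \<le> 1"
  shows "Lp_norm Q (\<lambda>x. min M (rn_density P Q x)) (ereal a)
          \<le> ennreal (M powr (1 - b)) * epowr (exp_renyi P Q (ereal a * ereal b)) (b - 1 / a)"
proof -
  interpret Q: prob_space Q by fact
  note bf = base_facts[OF assms(1-4)]
  define w where "w = rn_density P Q"
  have w0: "\<And>x. w x \<ge> 0" by (simp add: w_def rn_density_def)
  have wm: "w \<in> borel_measurable Q" using bf(1) by (simp add: w_def)
  define g where "g = a * b"
  define I where "I = (\<integral>\<^sup>+ x. ennreal (w x powr g) \<partial>Q)"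
  define J where "J = (\<integral>\<^sup>+ x. ennreal (min M (w x) powr a) \<partial>Q)"
  define c where "c = M powr (a*(1-b))"
  have c0: "c > 0" using assms by (simp add: c_def)
  have JI: "J \<le> ennreal c * I"
  proof -
    have "J \<le> (\<integral>\<^sup>+ x. ennreal c * ennreal (w x powr g) \<partial>Q)"
      unfolding J_def
    proof (intro nn_integral_mono)
      fix x
      have "min M (w x) powr a \<le> c * w x powr g"
        unfolding c_def g_def by (rule ptw1) (use assms w0 in auto)
      from ennreal_leI[OF this] show "ennreal (min M (w x) powr a) \<le> ennreal c * ennreal (w x powr g)"
        using c0 by (simp add: ennreal_mult)
    qed
    also have "\<dots> = ennreal c * I"
      unfolding I_def by (rule nn_integral_cmult) (use wm in auto)
    finally show ?thesis .
  qed
  have Ipos: "I \<noteq> 0" unfolding I_def w_def by (rule I_pos[OF assms(1-4)])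
  have LHS: "Lp_norm Q (\<lambda>x. min M (rn_density P Q x)) (ereal a) = epowr J (1/a)"
    by (simp add: Lp_norm_def J_def w_def)
  have LB: "epowr J (1/a) \<le> ennreal (M powr (1 - b) * i powr (1/a))" if Ii: "I = ennreal i" "i > 0" for i
  proof -
    have Jle: "J \<le> ennreal (c * i)" using JI Ii c0 by (simp add: ennreal_mult)
    then obtain j where Jj: "J = ennreal j" "j \<ge> 0"
      by (metis enn2real_nonneg ennreal_enn2real_if ennreal_neq_top neq_top_trans)
    have jle: "j \<le> c * i" using Jle Jj c0 Ii by (auto simp add: ennreal_le_iff2)
    show ?thesis
    proof (cases "j = 0")
      case True
      then show ?thesis using Jj assms by (simp add: epowr_zero)
    next
      case False
      then have "epowr J (1/a) = ennreal (j powr (1/a))"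
        using Jj assms by (simp add: epowr_fin)
      also have "\<dots> \<le> ennreal ((c * i) powr (1/a))"
        by (intro ennreal_leI powr_mono2) (use assms Jj jle in auto)
      also have "(c * i) powr (1/a) = M powr (1 - b) * i powr (1/a)"
        using c0 Ii assms by (simp add: c_def powr_mult powr_powr)
      finally show ?thesis .
    qed
  qed
  have ab: "ereal a * ereal b = ereal g" by (simp add: g_def)
  show ?thesis
  proof (cases "g = 1")
    case True
    have "I = 1" unfolding I_def True using bf(3) w0 by (simp add: w_def)
    then have "epowr J (1/a) \<le> ennreal (M powr (1 - b) * 1 powr (1/a))"
      by (intro LB) auto
    moreover have "b - 1/a = 0" using True assms by (simp add: g_def field_simps)
    ultimately show ?thesis using LHS by (simp add: epowr_def)
  next
    case False
    have ER: "exp_renyi P Q (ereal a * ereal b) = epowr I (1 / (g - 1))"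
      using False by (simp add: ab exp_renyi_def I_def w_def g_def)
    have e: "b - 1/a = (g - 1) / a" using assms by (simp add: g_def field_simps)
    show ?thesis
    proof (cases "I = \<infinity>")
      case True
      then have "g > 1" using I_fin[OF assms(1-4), of g] False assms
        by (auto simp: g_def I_def w_def mult_le_one not_le[symmetric])
      then have "epowr (exp_renyi P Q (ereal a * ereal b)) (b - 1 / a) = \<infinity>"
      proof -
        have h1: "1 / (g - 1) > 0" and h2: "(g - 1) / a > 0" using \<open>g > 1\<close> assms by auto
        show ?thesis unfolding ER e True by (simp only: epowr_top[OF h1] epowr_top[OF h2])
      qed
      moreover have "ennreal (M powr (1-b)) * \<infinity> = \<infinity>"
        using assms by (simp add: ennreal_mult_top)
      ultimately show ?thesis by simp
    next
      case False
      define i where "i = enn2real I"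
      have Ii: "I = ennreal i" "i > 0" using Ipos False
        by (auto simp: i_def enn2real_positive_iff less_top[symmetric] ennreal_enn2real zero_less_iff_neq_zero)
      have ERi: "exp_renyi P Q (ereal a * ereal b) = ennreal (i powr (1 / (g - 1)))"
        unfolding ER Ii(1) using Ii \<open>g \<noteq> 1\<close> by (simp add: epowr_fin)
      have "epowr (exp_renyi P Q (ereal a * ereal b)) (b - 1 / a) = ennreal ((i powr (1 / (g - 1))) powr ((g - 1) / a))"
        unfolding e by (subst ERi, rule epowr_fin) (use Ii \<open>g \<noteq> 1\<close> assms in auto)
      also have "\<dots> = ennreal (i powr (1/a))"
        proof -
        have "(1/(g-1))*((g-1)/a) = 1/a" using \<open>g \<noteq> 1\<close> assms by (simp add: field_simps)
        then show ?thesis using Ii \<open>g \<noteq> 1\<close> by (simp add: powr_powr)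
      qed
      finally have "ennreal (M powr (1 - b)) * epowr (exp_renyi P Q (ereal a * ereal b)) (b - 1 / a)
          = ennreal (M powr (1 - b) * i powr (1/a))" by (simp add: ennreal_mult)
      then show ?thesis using LHS LB[OF Ii] by simp
    qed
  qed
qed


lemma ptw2:
  fixes M b x s :: real
  assumes "M > 0" "0 \<le> b" "b \<le> 1" "0 \<le> x" "x \<le> s" "s > 0"
  shows "min M x \<le> M powr (1-b) * s powr b"
proof -
  let ?m = "min M s"
  have mp: "?m > 0" using assms by auto
  have "min M x \<le> ?m" using assms by auto
  also have "?m = ?m powr (1-b) * ?m powr b"
    using mp by (simp add: powr_add[symmetric])
  also have "\<dots> \<le> M powr (1-b) * s powr b"
    by (intro mult_mono powr_mono2) (use assms mp in auto)
  finally show ?thesis .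
qed

lemma ptw3:
  fixes M c x :: real
  assumes "M > 0" "c > 1" "0 \<le> x"
  shows "x - min M x \<le> x powr c / M powr (c-1)"
proof (cases "x \<le> M")
  case True then show ?thesis by simp
next
  case False
  then have xp: "x > 0" using assms by auto
  have "M powr (c-1) \<le> x powr (c-1)"
    by (intro powr_mono2) (use assms False in auto)
  then have "x * M powr (c-1) \<le> x * x powr (c-1)"
    using xp by simp
  also have "x * x powr (c-1) = x powr c"
    using xp by (simp add: powr_add[symmetric] powr_mult_base)
  finally have "x \<le> x powr c / M powr (c-1)"
    using assms by (simp add: field_simps)
  then show ?thesis using assms by linarith
qed

lemma S_facts:
  fixes P Q :: "'a measure"
  assumes "prob_space P" and "prob_space Q"
    and "sets P = sets Q"
    and "absolutely_continuous Q P"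
  shows "AE x in Q. ennreal (rn_density P Q x) \<le> esssup Q (RN_deriv Q P)"
    and "esssup Q (RN_deriv Q P) \<noteq> 0"
proof -
  note bf = base_facts[OF assms]
  show ae: "AE x in Q. ennreal (rn_density P Q x) \<le> esssup Q (RN_deriv Q P)"
    using esssup_AE[of "RN_deriv Q P" Q] bf(2) by eventually_elim auto
  show "esssup Q (RN_deriv Q P) \<noteq> 0"
  proof
    assume z: "esssup Q (RN_deriv Q P) = 0"
    from ae have "AE x in Q. rn_density P Q x = 0"
      by eventually_elim (use z in \<open>simp add: rn_density_def\<close>)
    with bf(4) show False by simp
  qed
qed

lemma part1_inf:
  fixes P Q :: "'a measure" and M b :: real
  assumes "prob_space P" and "prob_space Q"
    and "sets P = sets Q"
    and "absolutely_continuous Q P"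
    and "M > 0" "0 \<le> b" "b \<le> 1"
  shows "Lp_norm Q (\<lambda>x. min M (rn_density P Q x)) \<infinity>
          \<le> ennreal (M powr (1 - b)) * epowr (exp_renyi P Q (\<infinity> * ereal b)) b"
proof -
  note bf = base_facts[OF assms(1-4)]
  note sf = S_facts[OF assms(1-4)]
  have w0: "\<And>x. rn_density P Q x \<ge> 0" by (simp add: rn_density_def)
  have LHS: "Lp_norm Q (\<lambda>x. min M (rn_density P Q x)) \<infinity> = esssup Q (\<lambda>x. ennreal (min M (rn_density P Q x)))"
    by (simp add: Lp_norm_def)
  define S where "S = esssup Q (RN_deriv Q P)"
  show ?thesis
  proof (cases "b = 0")
    case True
    have "esssup Q (\<lambda>x. ennreal (min M (rn_density P Q x))) \<le> ennreal M"
      by (intro esssup_I AE_I2) (use bf(1) in \<open>auto intro: ennreal_leI\<close>)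
    then show ?thesis using True LHS assms by (simp add: epowr_def)
  next
    case False
    then have bp: "b > 0" using assms by simp
    have ER: "exp_renyi P Q (\<infinity> * ereal b) = S" using bp by (simp add: exp_renyi_def S_def)
    show ?thesis
    proof (cases "S = \<infinity>")
      case True
      then have "epowr (exp_renyi P Q (\<infinity> * ereal b)) b = \<infinity>" using ER bp by (simp add: epowr_top')
      moreover have "ennreal (M powr (1-b)) * \<infinity> = \<infinity>"
        using assms by (simp add: ennreal_mult_top)
      ultimately show ?thesis by simp
    next
      case False
      define s where "s = enn2real S"
      have Ss: "S = ennreal s" "s > 0" using False sf(2)
        by (auto simp: s_def S_def[symmetric] enn2real_positive_iff less_top[symmetric] ennreal_enn2real zero_less_iff_neq_zero)
      have E: "epowr (exp_renyi P Q (\<infinity> * ereal b)) b = ennreal (s powr b)"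
        using ER Ss bp by (simp add: epowr_fin)
      have "esssup Q (\<lambda>x. ennreal (min M (rn_density P Q x))) \<le> ennreal (M powr (1 - b) * s powr b)"
      proof (intro esssup_I)
        show "(\<lambda>x. ennreal (min M (rn_density P Q x))) \<in> borel_measurable Q" using bf(1) by auto
        show "AE x in Q. ennreal (min M (rn_density P Q x)) \<le> ennreal (M powr (1 - b) * s powr b)"
          using sf(1)
        proof eventually_elim
          case (elim x)
          then have "rn_density P Q x \<le> s" using Ss S_def by (simp add: ennreal_le_iff)
          then show ?case
            by (intro ennreal_leI ptw2) (use assms w0 Ss in auto)
        qed
      qed
      then show ?thesis using LHS E by (simp add: ennreal_mult)
    qed
  qed
qed


lemma part2:
  fixes P Q :: "'a measure" and M :: real and \<beta> :: ereal
  assumes "prob_space P" and "prob_space Q"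
    and "sets P = sets Q"
    and "absolutely_continuous Q P"
    and "M > 0" "1 \<le> \<beta>"
  shows "(\<integral>\<^sup>+ x. ennreal (rn_density P Q x - min M (rn_density P Q x)) \<partial>Q)
              \<le> eepowr (exp_renyi P Q \<beta> / ennreal M) (\<beta> - 1)"
proof -
  interpret Q: prob_space Q by fact
  note bf = base_facts[OF assms(1-4)]
  note sf = S_facts[OF assms(1-4)]
  define w where "w = rn_density P Q"
  have w0: "\<And>x. w x \<ge> 0" by (simp add: w_def rn_density_def)
  have wm: "w \<in> borel_measurable Q" using bf(1) by (simp add: w_def)
  define L where "L = (\<integral>\<^sup>+ x. ennreal (w x - min M (w x)) \<partial>Q)"
  have L1: "L \<le> 1"
  proof -
    have "L \<le> (\<integral>\<^sup>+ x. ennreal (w x) \<partial>Q)"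
      unfolding L_def by (intro nn_integral_mono ennreal_leI) (use assms w0 in auto)
    then show ?thesis using bf(3) by (simp add: w_def)
  qed
  show ?thesis
  proof (cases \<beta>)
    case PInf
    define S where "S = esssup Q (RN_deriv Q P)"
    have ER: "exp_renyi P Q \<beta> = S" using PInf by (simp add: exp_renyi_def S_def)
    show ?thesis
    proof (cases "S \<le> ennreal M")
      case True
      have "L = (\<integral>\<^sup>+ x. 0 \<partial>Q)" unfolding L_def
      proof (rule nn_integral_cong_AE)
        show "AE x in Q. ennreal (w x - min M (w x)) = 0"
          using sf(1)
        proof eventually_elim
          case (elim x)
          then have "ennreal (w x) \<le> ennreal M" using True by (simp add: S_def w_def)
          then have "w x \<le> M" using assms by (simp add: ennreal_le_iff)
          then show ?case by simp
        qed
      qed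
      then show ?thesis unfolding L_def w_def by simp
    next
      case False
      have "S / ennreal M > 1"
      proof (cases "S = top")
        case True then show ?thesis using assms by (simp add: ennreal_top_divide)
      next
        case nt: False
        define s where "s = enn2real S"
        have Ss: "S = ennreal s" "s \<ge> 0" using nt
          by (auto simp: s_def less_top[symmetric] ennreal_enn2real)
        have "s > M" using False Ss by (meson ennreal_leI not_le)
        then have "s / M > 1" using assms by simp
        then show ?thesis using Ss assms by (simp add: divide_ennreal)
      qed
      then show ?thesis using ER PInf by (simp add: eepowr_def)
    qed
  next
    case MInf then show ?thesis using assms by simp
  next
    case (real c)
    then have c1: "c \<ge> 1" using assms by simp
    show ?thesis
    proof (cases "c = 1")
      case True
      then have "\<beta> - 1 = 0" using real by (simp add: one_ereal_def)
      then have "eepowr (exp_renyi P Q \<beta> / ennreal M) (\<beta> - 1) = 1"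
        by (simp add: eepowr_def epowr_def)
      then show ?thesis using L1 by (simp add: L_def w_def)
    next
      case False
      then have c1: "c > 1" using c1 by simp
      define I where "I = (\<integral>\<^sup>+ x. ennreal (w x powr c) \<partial>Q)"
      define k where "k = 1 / M powr (c-1)"
      have k0: "k > 0" using assms by (simp add: k_def)
      have ER: "exp_renyi P Q \<beta> = epowr I (1 / (c - 1))"
        using real c1 by (simp add: exp_renyi_def I_def w_def)
      have EE: "eepowr (exp_renyi P Q \<beta> / ennreal M) (\<beta> - 1) = epowr (epowr I (1 / (c - 1)) / ennreal M) (c - 1)"
      proof -
        have "\<beta> - 1 = ereal (c - 1)" using real by (simp add: one_ereal_def)
        then show ?thesis using ER by (simp add: eepowr_def)
      qed
      have LI: "L \<le> ennreal k * I"
      proof -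
        have "L \<le> (\<integral>\<^sup>+ x. ennreal k * ennreal (w x powr c) \<partial>Q)"
          unfolding L_def
        proof (intro nn_integral_mono)
          fix x
          have "w x - min M (w x) \<le> k * w x powr c"
            using ptw3[OF assms(5) c1 w0[of x]] by (simp add: k_def)
          from ennreal_leI[OF this] show "ennreal (w x - min M (w x)) \<le> ennreal k * ennreal (w x powr c)"
            using k0 by (simp add: ennreal_mult)
        qed
        also have "\<dots> = ennreal k * I"
          unfolding I_def by (rule nn_integral_cmult) (use wm in auto)
        finally show ?thesis .
      qed
      have Ipos: "I \<noteq> 0" unfolding I_def w_def by (rule I_pos[OF assms(1-4)])
      show ?thesis
      proof (cases "I = top")
        case True
        have h1: "1 / (c - 1) > 0" and h2: "c - 1 > 0" using c1 by auto
        have "epowr I (1 / (c - 1)) = top" using True by (simp only: epowr_top'[OF h1])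
        then have "epowr (epowr I (1 / (c - 1)) / ennreal M) (c - 1) = top"
          using assms by (simp add: ennreal_top_divide epowr_top'[OF h2])
        then show ?thesis using EE by simp
      next
        case False
        define i where "i = enn2real I"
        have Ii: "I = ennreal i" "i > 0" using Ipos False
          by (auto simp: i_def enn2real_positive_iff less_top[symmetric] ennreal_enn2real zero_less_iff_neq_zero)
        have "epowr I (1 / (c - 1)) = ennreal (i powr (1 / (c - 1)))"
          unfolding Ii(1) by (rule epowr_fin) (use Ii c1 in auto)
        then have "epowr I (1 / (c - 1)) / ennreal M = ennreal (i powr (1 / (c - 1)) / M)"
          using assms by (simp add: divide_ennreal)
        then have "epowr (epowr I (1 / (c - 1)) / ennreal M) (c - 1) = ennreal ((i powr (1 / (c - 1)) / M) powr (c - 1))"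
          using assms Ii c1 by (simp add: epowr_fin)
        also have "(i powr (1 / (c - 1)) / M) powr (c - 1) = k * i"
          using assms Ii c1 by (simp add: powr_divide powr_powr k_def)
        finally have "eepowr (exp_renyi P Q \<beta> / ennreal M) (\<beta> - 1) = ennreal (k * i)" using EE by simp
        moreover have "L \<le> ennreal (k * i)" using LI Ii k0 by (simp add: ennreal_mult)
        ultimately show ?thesis unfolding L_def w_def by simp
      qed
    qed
  qed
qed


theorem lemma1:
  fixes P Q :: "'a measure" and M :: real
  assumes "prob_space P" and "prob_space Q"
    and "sets P = sets Q"
    and "absolutely_continuous Q P"
    and "M > 0"
  shows "(\<forall>(\<alpha>::ereal) (\<beta>::real). 0 < \<alpha> \<longrightarrow> 0 \<le> \<beta> \<longrightarrow> \<beta> \<le> 1 \<longrightarrow>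
            Lp_norm Q (\<lambda>x. min M (rn_density P Q x)) \<alpha>
              \<le> ennreal (M powr (1 - \<beta>))
                 * epowr (exp_renyi P Q (\<alpha> * ereal \<beta>))
                         (\<beta> - (if \<alpha> = \<infinity> then 0 else 1 / real_of_ereal \<alpha>)))
       \<and> (\<forall>\<beta>::ereal. 1 \<le> \<beta> \<longrightarrow>
            (\<integral>\<^sup>+ x. ennreal (rn_density P Q x - min M (rn_density P Q x)) \<partial>Q)
              \<le> eepowr (exp_renyi P Q \<beta> / ennreal M) (\<beta> - 1))"
proof (intro conjI allI impI)
  fix \<alpha> :: ereal and b :: real
  assume a0: "0 < \<alpha>" and b: "0 \<le> b" "b \<le> 1"
  show "Lp_norm Q (\<lambda>x. min M (rn_density P Q x)) \<alpha>
              \<le> ennreal (M powr (1 - b))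
                 * epowr (exp_renyi P Q (\<alpha> * ereal b))
                         (b - (if \<alpha> = \<infinity> then 0 else 1 / real_of_ereal \<alpha>))"
  proof (cases \<alpha>)
    case (real a)
    then have "a > 0" using a0 by simp
    then show ?thesis using part1_fin[OF assms \<open>a > 0\<close> b] real by simp
  next
    case PInf
    then show ?thesis using part1_inf[OF assms b] by simp
  next
    case MInf
    then show ?thesis using a0 by simp
  qed
next
  fix \<beta> :: ereal
  assume "1 \<le> \<beta>"
  then show "(\<integral>\<^sup>+ x. ennreal (rn_density P Q x - min M (rn_density P Q x)) \<partial>Q)
              \<le> eepowr (exp_renyi P Q \<beta> / ennreal M) (\<beta> - 1)"
    by (rule part2[OF assms])
qed

end
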